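(* Let $\Lambda=(\Lambda_1,\dots,\Lambda_d)$ be a $d$-partition of $\{1,\dots,N\}$ and consider the associated lumped chain. Then $$\mathbb E^\circ\tau^0_0=\prod_{k=1}^d\sqrt{\frac{\pi}{2}|\Lambda_k|}\,\bigl(1+O(|\Lambda_k|^{-1})\bigr).$$
   Context: Let $(\sigma_N(t))_{t\in\mathbb N}$ be the discrete-time simple random walk on $\{-1,1\}^N$ (jump to each Hamming neighbour with probability $1/N$). For a partition $\Lambda$ of $\{1,\dots,N\}$ into nonempty classes $\Lambda_1,\dots,\Lambda_d$, let $\gamma(\sigma)=(\gamma_1(\sigma),\dots,\gamma_d(\sigma))$ with $\gamma_k(\sigma)=|\Lambda_k|^{-1}\sum_{i\in\Lambda_k}\sigma_i$, and $\Gamma_{N,d}=\gamma(\{-1,1\}^N)$. The lumped chain $X_N(t)=\gamma(\sigma_N(t))$ is a Markov chain on $\Gamma_{N,d}$ with transition probabilities $r_N(x,x+s\frac{2}{|\Lambda_k|}u_k)=\frac{|\Lambda_k|}{N}\frac{1-sx_k}{2}$ ($s\in\{-1,1\}$, $u_k$ the canonical basis of $\mathbb R^d$) and reversible invariant measure $\mathbb Q_N(x)=2^{-N}\prod_{k=1}^d\binom{|\Lambda_k|}{|\Lambda_k|(1+x_k)/2}$. $\mathbb P^\circ,\mathbb E^\circ$ refer to the lumped chain; $\tau^x_J=\inf\{t>0:X_N(t)\in J\}$ for the chain started at $x$. The symbol $0$ denotes a fixed point of $\Gamma_{N,d}$ at which $\mathbb Q_N$ attains its maximum (the origin of $\mathbb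 R^d$ when all $|\Lambda_k|$ are even). *)

theory Defs
  imports Complex_Main "HOL-Library.Extended_Nonnegative_Real"
begin

definition is_partition :: "nat \<Rightarrow> nat \<Rightarrow> (nat \<Rightarrow> nat set) \<Rightarrow> bool" where
  "is_partition N d Lam \<longleftrightarrow>
     (\<forall>k<d. Lam k \<noteq> {}) \<and>
     (\<forall>k<d. \<forall>l<d. k \<noteq> l \<longrightarrow> Lam k \<inter> Lam l = {}) \<and>
     (\<Union>k\<in>{..<d}. Lam k) = {1..N}"

text \<open>States of R^d are represented as functions nat => real vanishing at indices >= d.\<close>
definition gamma :: "nat \<Rightarrow> (nat \<Rightarrow> nat set) \<Rightarrow> (nat \<Rightarrow> real) \<Rightarrow> (nat \<Rightarrow> real)" where
  "gamma d Lam \<sigma> = (\<lambda>k. if k < d then (\<Sum>i\<in>Lam k. \<sigma> i) / real (card (Lam k)) else 0)"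

definition Gamma :: "nat \<Rightarrow> nat \<Rightarrow> (nat \<Rightarrow> nat set) \<Rightarrow> (nat \<Rightarrow> real) set" where
  "Gamma N d Lam = gamma d Lam ` {\<sigma>. \<forall>i\<in>{1..N}. \<sigma> i = -1 \<or> \<sigma> i = 1}"

definition lumped_trans :: "nat \<Rightarrow> nat \<Rightarrow> (nat \<Rightarrow> nat set) \<Rightarrow> (nat \<Rightarrow> real) \<Rightarrow> (nat \<Rightarrow> real) \<Rightarrow> real" where
  "lumped_trans N d Lam x y =
     (\<Sum>k<d. \<Sum>s\<in>{-1, 1::real}.
        if y = x(k := x k + s * 2 / real (card (Lam k)))
        then real (card (Lam k)) / real N * (1 - s * x k) / 2 else 0)"

definition QN :: "nat \<Rightarrow> nat \<Rightarrow> (nat \<Rightarrow> nat set) \<Rightarrow> (nat \<Rightarrow> real) \<Rightarrow> real" where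
  "QN N d Lam x = (1/2) ^ N *
     (\<Prod>k<d. real (card (Lam k) choose nat \<lfloor>real (card (Lam k)) * (1 + x k) / 2\<rfloor>))"

text \<open>Generic finite-state Markov chain with kernel P on state space S, started at x.
  taboo P S J x n y = probability that X(n) = y and X(t) \<notin> J for 1 \<le> t \<le> n.\<close>
fun taboo :: "('a \<Rightarrow> 'a \<Rightarrow> real) \<Rightarrow> 'a set \<Rightarrow> 'a set \<Rightarrow> 'a \<Rightarrow> nat \<Rightarrow> 'a \<Rightarrow> real" where
  "taboo P S J x 0 y = (if y = x then 1 else 0)"
| "taboo P S J x (Suc n) y = (if y \<in> J then 0 else (\<Sum>z\<in>S. taboo P S J x n z * P z y))"

text \<open>first_hit P S J x n = P(tau^x_J = n + 1), tau^x_J = inf{t > 0. X(t) \<in> J}.\<close>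
definition first_hit :: "('a \<Rightarrow> 'a \<Rightarrow> real) \<Rightarrow> 'a set \<Rightarrow> 'a set \<Rightarrow> 'a \<Rightarrow> nat \<Rightarrow> real" where
  "first_hit P S J x n = (\<Sum>z\<in>S. taboo P S J x n z * (\<Sum>y\<in>J. P z y))"

text \<open>Expectation of tau^x_J (value infinity on the event tau = infinity).\<close>
definition expected_hit :: "('a \<Rightarrow> 'a \<Rightarrow> real) \<Rightarrow> 'a set \<Rightarrow> 'a set \<Rightarrow> 'a \<Rightarrow> ennreal" where
  "expected_hit P S J x =
     (\<Sum>n. ennreal (real (Suc n) * first_hit P S J x n))
     + \<infinity> * (1 - (\<Sum>n. ennreal (first_hit P S J x n)))"

end

theory Submission
  imports Defs "HOL-Analysis.Analysis" "HOL-Real_Asymp.Real_Asymp"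
begin

hide_const (open) Gamma_Function.Gamma


definition Wp :: "nat \<Rightarrow> real" where
  "Wp n = (\<Prod>k=1..n. (4*real k^2) / (4*real k^2 - 1))"

definition Rw :: "nat \<Rightarrow> real" where
  "Rw m = 4^m / real (2*m choose m)"

lemma central_rec:
  "real ((2*m+2) choose (m+1)) * (real m+1)^2 = real (2*m choose m) * (2*real m+1)*(2*real m+2)"
proof -
  have a0: "fact (m+1) * fact (2*m+2 - (m+1)) * ((2*m+2) choose (m+1)) = (fact (2*m+2)::nat)"
    by (rule binomial_fact_lemma) simp
  have b0: "fact m * fact (2*m - m) * ((2*m) choose m) = (fact (2*m)::nat)"
    by (rule binomial_fact_lemma) simp
  have e1: "2*m+2 - (m+1) = m+1" "2*m - m = m" by simp_all
  have a: "real ((2*m+2) choose (m+1)) * (fact (m+1) * fact (m+1)) = fact (2*m+2)"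
    using arg_cong[OF a0, of real] unfolding e1 by (simp add: of_nat_mult algebra_simps)
  have b: "real ((2*m) choose m) * (fact m * fact m) = fact (2*m)"
    using arg_cong[OF b0, of real] unfolding e1 by (simp add: of_nat_mult algebra_simps)
  have c: "(fact (2*m+2)::real) = (2*real m+2)*(2*real m+1)* fact (2*m)"
    by (simp add: algebra_simps numeral_eq_Suc)
  have d: "(fact (m+1)::real) = (real m+1) * fact m" by simp
  have F: "(fact m * fact m :: real) > 0" by simp
  have "real ((2*m+2) choose (m+1)) * (real m+1)^2 * (fact m * fact m)
        = real (2*m choose m) * (2*real m+1)*(2*real m+2) * (fact m * fact m)"
  proof -
    have "real ((2*m+2) choose (m+1)) * (real m+1)^2 * (fact m * fact m)
        = real ((2*m+2) choose (m+1)) * (fact (m+1) * fact (m+1))"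
      unfolding d by (simp add: power2_eq_square algebra_simps)
    also have "\<dots> = (2*real m+2)*(2*real m+1)* (real ((2*m) choose m) * (fact m * fact m))"
      unfolding a c b ..
    finally show ?thesis by (simp add: algebra_simps)
  qed
  then show ?thesis using F by simp
qed

lemma aux0: "C > 0 \<Longrightarrow> a > 0 \<Longrightarrow> b > 0 \<Longrightarrow> 4*(F::real)/(C*a*(2*b)/b^2) = F/C*(2*b)/a"
  by (simp add: field_simps power2_eq_square)

lemma Rw_Suc: "Rw (Suc m) = Rw m * (2*real m+2)/(2*real m+1)"
proof -
  have pos: "real (2*m choose m) > 0" by simp
  have p1: "2*real m+1 > 0" "real m + 1 > 0" by simp_all
  have X: "real ((2*m+2) choose (m+1)) = real (2*m choose m) * (2*real m+1)*(2*real m+2) / (real m+1)^2"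
    using central_rec[of m] p1 by (simp add: field_simps)
  have e: "Suc m = m+1" "2*(m+1) = 2*m+2" by simp_all
  have "Rw (Suc m) = 4^(m+1) / real ((2*m+2) choose (m+1))" unfolding Rw_def e(1) unfolding e(2) ..
  also have "\<dots> = 4^(m+1) / (real (2*m choose m) * (2*real m+1)*(2*real m+2) / (real m+1)^2)"
    unfolding X ..
  also have "\<dots> = Rw m * (2*real m+2)/(2*real m+1)"
  proof -
    have "(2*real m+2) = 2*(real m+1)" by simp
    then show ?thesis unfolding Rw_def power_Suc[of "4::real" m, unfolded Suc_eq_plus1]
      by (simp only:) (rule aux0; use pos p1 in simp)
  qed
  finally show ?thesis .
qed

lemma Wp_Suc: "Wp (Suc m) = Wp m * (4*(real m+1)^2 / (4*(real m+1)^2 - 1))"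
  unfolding Wp_def by (simp add: prod.nat_ivl_Suc' add_ac)

lemma aux1: "(a::real) > 0 \<Longrightarrow> b > 0 \<Longrightarrow> a * W * c / a^2 = b * (W * (c / (a*b)))"
  by (simp add: field_simps power2_eq_square)

lemma aux2: "(a::real) > 0 \<Longrightarrow> b > 0 \<Longrightarrow> y > 0 \<Longrightarrow> (R*(2*b)/y)^2/b = R^2/a*(4*a*b/y^2)"
  by (simp add: field_simps power2_eq_square)

lemma aux3: "(b::real) > 0 \<Longrightarrow> a \<le> b \<Longrightarrow> a / b \<le> 1"
  by simp

lemma Rw_sq: "Rw m ^ 2 = (2*real m+1) * Wp m"
proof (induction m)
  case 0 then show ?case by (simp add: Rw_def Wp_def)
next
  case (Suc m)
  have p: "2*real m+1 > 0" "2*real m+3 > 0" "2*real m+2 > 0" by simp_all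
  have ne: "4*(real m+1)^2 - 1 = (2*real m+1)*(2*real m+3)" by (simp add: algebra_simps power2_eq_square)
  have "Rw (Suc m)^2 = Rw m^2 * (2*real m+2)^2/(2*real m+1)^2"
    by (simp add: Rw_Suc power_divide power_mult_distrib)
  also have "\<dots> = (2*real m+1) * Wp m * (2*real m+2)^2/(2*real m+1)^2" using Suc by simp
  also have "\<dots> = (2*real m+3) * (Wp m * ((2*real m+2)^2 / ((2*real m+1)*(2*real m+3))))"
    by (rule aux1) (use p in auto)
  also have "\<dots> = (2*real (Suc m)+1) * Wp (Suc m)"
    unfolding Wp_Suc ne[symmetric] by (simp add: power2_eq_square algebra_simps)
  finally show ?case .
qed

lemma ge1_aux: "(x::real) \<ge> 4 \<Longrightarrow> 1 \<le> x / (x - 1)"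
  by (simp add: le_divide_eq)

lemma Wp_ge1: "Wp m \<ge> 1"
proof (induction m)
  case 0 then show ?case by (simp add: Wp_def)
next
  case (Suc m)
  have "4*(real m+1)^2 / (4*(real m+1)^2 - 1) \<ge> 1" by (rule ge1_aux) (use one_le_power[of "real m + 1" 2] in simp)
  then show ?case using Suc unfolding Wp_Suc by (metis mult_mono' mult_1 zero_le_one)
qed

lemma Wp_le: "Wp m \<le> pi/2"
proof -
  have "incseq Wp"
  proof (rule incseq_SucI)
    fix m
    have "4*(real m+1)^2 / (4*(real m+1)^2 - 1) \<ge> 1" by (rule ge1_aux) (use one_le_power[of "real m + 1" 2] in simp)
    then show "Wp m \<le> Wp (Suc m)" unfolding Wp_Suc using Wp_ge1[of m]
      by (metis mult_left_mono mult.right_neutral order_trans zero_le_one)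
  qed
  moreover have "Wp \<longlonglongrightarrow> pi/2" using wallis unfolding Wp_def .
  ultimately show ?thesis by (rule incseq_le)
qed

lemma Rw_upper: "Rw m ^ 2 \<le> pi * (real m + 1/2)"
proof -
  have "Rw m ^ 2 = (2*real m+1) * Wp m" by (rule Rw_sq)
  also have "\<dots> \<le> (2*real m+1) * (pi/2)" by (intro mult_left_mono Wp_le) auto
  finally show ?thesis by (simp add: algebra_simps)
qed

lemma Rw_lower: assumes "m \<ge> 1" shows "pi * real m \<le> Rw m ^ 2"
proof -
  define g where "g m = Rw (Suc m)^2 / real (Suc m)" for m
  have gW: "g m = (2*real m+3)/(real m+1) * Wp (Suc m)" for m
    unfolding g_def Rw_sq by (simp add: field_simps)
  have "decseq g"
  proof (rule decseq_SucI)
    fix m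
    have p: "2*real m+3 > 0" "real m+2 > 0" "real m + 1 > 0" by simp_all
    have r: "Rw (Suc (Suc m)) = Rw (Suc m) * (2*(real m+2))/(2*real m+3)"
      using Rw_Suc[of "Suc m"] by (simp add: algebra_simps)
    have r2: "real (Suc (Suc m)) = real m + 2" "real (Suc m) = real m + 1" by simp_all
    have "g (Suc m) = (Rw (Suc m) * (2*(real m+2))/(2*real m+3))^2 / (real m+2)"
      unfolding g_def r r2 ..
    also have "\<dots> = g m * (4*(real m+1)*(real m+2)/(2*real m+3)^2)"
      unfolding g_def r2 by (rule aux2) auto
    finally have "g (Suc m) = g m * (4*(real m+1)*(real m+2)/(2*real m+3)^2)" .
    moreover have "4*(real m+1)*(real m+2)/(2*real m+3)^2 \<le> 1"
    proof (rule aux3)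
      show "4*(real m+1)*(real m+2) \<le> (2*real m+3)^2" by (simp add: power2_eq_square algebra_simps)
    qed (use p in simp)
    moreover have "g m \<ge> 0" unfolding g_def by simp
    ultimately show "g (Suc m) \<le> g m" by (metis mult_left_le)
  qed
  moreover have "g \<longlonglongrightarrow> 2 * (pi/2)"
  proof -
    have "(\<lambda>m. (2*real m+3)/(real m+1)) \<longlonglongrightarrow> 2" by real_asymp
    moreover have "(\<lambda>m. Wp (Suc m)) \<longlonglongrightarrow> pi/2"
      using wallis unfolding Wp_def[symmetric] by (rule LIMSEQ_Suc)
    ultimately show ?thesis unfolding gW by (rule tendsto_mult)
  qed
  ultimately have "pi \<le> g (m - 1)" using decseq_ge by fastforce
  then show ?thesis using assms unfolding g_def by (simp add: field_simps)
qed

lemma Rw_binom: "2^n / real (n choose (n div 2)) = Rw ((n+1) div 2)"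
proof (cases "even n")
  case True
  then obtain m where n: "n = 2*m" by auto
  then show ?thesis by (simp add: Rw_def power_mult)
next
  case False
  then obtain m where n: "n = 2*m+1" using oddE by blast
  have "(2*m+2) choose (m+1) = 2 * ((2*m+1) choose m)"
  proof -
    have "(2*m+2) choose (m+1) = ((2*m+1) choose m) + ((2*m+1) choose (m+1))"
      by (metis add_2_eq_Suc' add.commute binomial_Suc_Suc Suc_eq_plus1 add_Suc_right)
    moreover have "(2*m+1) choose (m+1) = (2*m+1) choose m"
      using binomial_symmetric[of m "2*m+1"] by (simp add: numeral_eq_Suc)
    ultimately show ?thesis by simp
  qed
  moreover have "(n+1) div 2 = m+1" "n div 2 = m" using n by auto
  moreover have "(4::real)^(m+1) = 2 * 2^n" using n by (simp add: power_mult)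
  ultimately show ?thesis unfolding Rw_def using n
    by (simp add: field_simps)
qed

lemma binom_asymp:
  assumes "n \<ge> 1"
  shows "\<exists>e. \<bar>e\<bar> \<le> 1 / real n \<and> 2^n / real (n choose (n div 2)) = sqrt (pi/2 * real n) * (1 + e)"
proof -
  define p where "p = (n+1) div 2"
  have p1: "p \<ge> 1" using assms unfolding p_def by auto
  have p2: "2 * real p \<ge> real n" "2*real p \<le> real n + 1" unfolding p_def by linarith+
  define s where "s = sqrt (pi/2 * real n)"
  have spos: "s > 0" unfolding s_def using assms by auto
  have s2: "s^2 = pi/2 * real n" unfolding s_def using assms by simp
  define e where "e = Rw p / s - 1"
  have Rpos: "Rw p > 0" unfolding Rw_def by simp
  have eq: "Rw p = s * (1 + e)" unfolding e_def using spos by simp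
  have lo: "pi * real p \<le> Rw p ^ 2" by (rule Rw_lower[OF p1])
  have hi: "Rw p ^ 2 \<le> pi * (real p + 1/2)" by (rule Rw_upper)
  have sq: "Rw p ^ 2 = s^2 * (1+e)^2" unfolding eq by (simp add: power_mult_distrib)
  have A: "(1+e)^2 \<ge> 1"
  proof -
    have "s^2 \<le> pi * real p" unfolding s2 using p2 pi_gt_zero by simp
    then have "s^2 * 1 \<le> s^2 * (1+e)^2" using lo sq by simp
    then show ?thesis using spos by (simp add: mult_le_cancel_left)
  qed
  have "1 + e > 0" using Rpos spos eq by (simp add: zero_less_mult_iff)
  then have "1 \<le> 1 + e" using power2_le_imp_le[of 1 "1+e"] A by simp
  then have e0: "e \<ge> 0" by simp
  have B: "(1+e)^2 \<le> 1 + 2 / real n"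
  proof -
    have "pi * (real p + 1/2) \<le> pi * (real n/2 + 1)" using p2 pi_gt_zero by simp
    then have "s^2 * (1+e)^2 \<le> pi * (real n/2 + 1)" using hi sq by linarith
    also have "\<dots> = s^2 * (1 + 2/real n)" unfolding s2 using assms by (simp add: field_simps)
    finally show ?thesis using spos by (simp add: mult_le_cancel_left)
  qed
  have "1 + 2*e \<le> (1+e)^2" by (simp add: power2_eq_square algebra_simps)
  then have "e \<le> 1 / real n" using B by simp
  then show ?thesis using e0 eq Rw_binom[of n] unfolding p_def s_def by (intro exI[of _ e]) auto
qed



lemma dec_summable_nT:
  fixes T :: "nat \<Rightarrow> real"
  assumes dec: "\<And>n. T (Suc n) \<le> T n" and nn: "\<And>n. T n \<ge> 0" and sm: "summable T"
  shows "(\<lambda>n. real n * T n) \<longlonglongrightarrow> 0"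
proof -
  have decs: "decseq T" using dec by (rule decseq_SucI)
  show ?thesis unfolding LIMSEQ_iff
  proof (intro allI impI)
    fix r :: real assume r: "r > 0"
    obtain N where N: "\<And>m n. m \<ge> N \<Longrightarrow> norm (sum T {m..<n}) < r/2"
      using sm[unfolded summable_Cauchy, rule_format, of "r/2"] r by auto
    show "\<exists>no. \<forall>n\<ge>no. norm (real n * T n - 0) < r"
    proof (intro exI allI impI)
      fix n assume n: "n \<ge> 2*N"
      define h where "h = n div 2"
      have hN: "h \<ge> N" using n unfolding h_def by auto
      have "real (n - h) * T n = (\<Sum>i\<in>{h..<n}. T n)" by simp
      also have "\<dots> \<le> (\<Sum>i\<in>{h..<n}. T i)"
        by (intro sum_mono) (use decs in \<open>auto simp: decseq_def\<close>)
      also have "\<dots> < r/2" using N[OF hN, of n] by (simp add: abs_if split: if_splits)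
      finally have a: "real (n - h) * T n < r/2" .
      have "real n \<le> 2 * real (n - h)" unfolding h_def by linarith
      then have "real n * T n \<le> 2 * real (n - h) * T n" using nn[of n] by (intro mult_right_mono) auto
      then show "norm (real n * T n - 0) < r" using a nn[of n] by simp
    qed
  qed
qed

lemma sum_if_skip:
  assumes "finite S" "z \<in> S"
  shows "(\<Sum>y\<in>S. if y \<in> {z} then 0 else g y) = (\<Sum>y\<in>S. g y) - (g z :: real)"
proof -
  have "(\<Sum>y\<in>S. if y \<in> {z} then 0 else g y) = (if z \<in> {z} then 0 else g z) + (\<Sum>y\<in>S-{z}. if y \<in> {z} then 0 else g y)"
    using assms by (rule sum.remove)
  also have "\<dots> = (\<Sum>y\<in>S-{z}. g y)" by (auto intro!: sum.cong)
  also have "\<dots> = (\<Sum>y\<in>S. g y) - g z" using sum.remove[OF assms, of g] by simp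
  finally show ?thesis .
qed

lemma taboo_nn:
  assumes "\<And>x y. x \<in> S \<Longrightarrow> y \<in> S \<Longrightarrow> P x y \<ge> 0"
  shows "y \<in> S \<Longrightarrow> taboo P S J x n y \<ge> 0"
proof (induction n arbitrary: y)
  case 0 then show ?case by simp
next
  case (Suc n) then show ?case
    by (auto intro!: sum_nonneg mult_nonneg_nonneg assms)
qed

lemma taboo_back:
  assumes fin: "finite S" and xS: "x \<in> S"
  shows "y \<in> S \<Longrightarrow> taboo P S {z} x (Suc n) y = (\<Sum>w\<in>S-{z}. P x w * taboo P S {z} w n y)"
proof (induction n arbitrary: y)
  case 0
  have a: "(\<Sum>w\<in>S. (if w = x then 1 else 0) * P w y) = (\<Sum>w\<in>S. if w = x then P x y else 0)"
    by (intro sum.cong) auto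
  have b: "(\<Sum>w\<in>S-{z}. P x w * (if y = w then 1 else 0)) = (\<Sum>w\<in>S-{z}. if w = y then P x y else 0)"
    by (intro sum.cong) auto
  have "taboo P S {z} x (Suc 0) y = (if y = z then 0 else (\<Sum>w\<in>S. (if w = x then 1 else 0) * P w y))"
    by simp
  also have "\<dots> = (if y = z then 0 else P x y)" unfolding a using fin xS by simp
  also have "\<dots> = (\<Sum>w\<in>S-{z}. P x w * (if y = w then 1 else 0))"
    unfolding b using 0 fin by simp
  finally show ?case by simp
next
  case (Suc n)
  have "taboo P S {z} x (Suc (Suc n)) y =
        (if y = z then 0 else (\<Sum>u\<in>S. (\<Sum>w\<in>S-{z}. P x w * taboo P S {z} w n u) * P u y))"
    using Suc.IH by simp
  also have "\<dots> = (if y = z then 0 else (\<Sum>w\<in>S-{z}. P x w * (\<Sum>u\<in>S. taboo P S {z} w n u * P u y)))"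
  proof -
    have "(\<Sum>u\<in>S. (\<Sum>w\<in>S-{z}. P x w * taboo P S {z} w n u) * P u y)
        = (\<Sum>w\<in>S-{z}. P x w * (\<Sum>u\<in>S. taboo P S {z} w n u * P u y))"
      unfolding sum_distrib_left sum_distrib_right mult.assoc by (rule sum.swap)
    then show ?thesis by simp
  qed
  also have "\<dots> = (\<Sum>w\<in>S-{z}. P x w * taboo P S {z} w (Suc n) y)"
    by simp
  finally show ?case .
qed

theorem kac:
  fixes P :: "'a \<Rightarrow> 'a \<Rightarrow> real" and \<phi> :: "'a \<Rightarrow> nat"
  assumes fin: "finite S" and zS: "z \<in> S"
    and Pnn: "\<And>x y. x \<in> S \<Longrightarrow> y \<in> S \<Longrightarrow> P x y \<ge> 0"
    and rows: "\<And>x. x \<in> S \<Longrightarrow> (\<Sum>y\<in>S. P x y) = 1"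
    and Qnn: "\<And>x. x \<in> S \<Longrightarrow> Q x \<ge> 0" and Qz: "Q z > 0" and Qsum: "(\<Sum>x\<in>S. Q x) = 1"
    and stat: "\<And>y. y \<in> S \<Longrightarrow> (\<Sum>x\<in>S. Q x * P x y) = Q y"
    and irr: "\<And>x. x \<in> S \<Longrightarrow> x \<noteq> z \<Longrightarrow> \<exists>y\<in>S. P x y > 0 \<and> \<phi> y < \<phi> x"
  shows "expected_hit P S {z} z = ennreal (1 / Q z)"
proof -
  define t where "t x n y = taboo P S {z} x n y" for x n y
  have tnn: "y \<in> S \<Longrightarrow> t x n y \<ge> 0" for x n y unfolding t_def by (rule taboo_nn[OF Pnn])
  define u where "u n x = (\<Sum>y\<in>S. t x n y)" for n x
  define fh where "fh x n = (\<Sum>w\<in>S. t x n w * P w z)" for x n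
  have fh_def': "first_hit P S {z} x n = fh x n" for x n
    unfolding first_hit_def fh_def t_def by simp
  have fhnn: "fh x n \<ge> 0" for x n
    unfolding fh_def by (intro sum_nonneg mult_nonneg_nonneg tnn Pnn zS)
  have u0: "x \<in> S \<Longrightarrow> u 0 x = 1" for x unfolding u_def t_def using fin by simp
  have uSuc: "u (Suc n) x = u n x - fh x n" for n x
  proof -
    have "u (Suc n) x = (\<Sum>y\<in>S. if y \<in> {z} then 0 else (\<Sum>w\<in>S. t x n w * P w y))"
      unfolding u_def t_def by simp
    also have "\<dots> = (\<Sum>y\<in>S. \<Sum>w\<in>S. t x n w * P w y) - (\<Sum>w\<in>S. t x n w * P w z)"
      by (rule sum_if_skip[OF fin zS])
    also have "(\<Sum>y\<in>S. \<Sum>w\<in>S. t x n w * P w y) = (\<Sum>w\<in>S. t x n w * (\<Sum>y\<in>S. P w y))"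
      unfolding sum_distrib_left by (rule sum.swap)
    also have "\<dots> = u n x" unfolding u_def by (intro sum.cong) (auto simp: rows)
    finally show ?thesis unfolding fh_def .
  qed
  have unn: "u n x \<ge> 0" for n x unfolding u_def by (intro sum_nonneg tnn)
  have uback: "x \<in> S \<Longrightarrow> u (Suc n) x = (\<Sum>w\<in>S-{z}. P x w * u n w)" for n x
  proof -
    assume xS: "x \<in> S"
    have "u (Suc n) x = (\<Sum>y\<in>S. \<Sum>w\<in>S-{z}. P x w * t w n y)"
      unfolding u_def t_def by (intro sum.cong refl taboo_back[OF fin xS])
    also have "\<dots> = (\<Sum>w\<in>S-{z}. P x w * u n w)"
      unfolding u_def sum_distrib_left by (rule sum.swap)
    finally show ?thesis .
  qed
  have ule1: "x \<in> S \<Longrightarrow> u n x \<le> 1" for n x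
  proof (induction n)
    case 0 then show ?case using u0 by simp
  next
    case (Suc n) then show ?case using uSuc[of n x] fhnn[of x n] by simp
  qed
  have "\<forall>x. \<exists>L. (\<lambda>n. u n x) \<longlonglongrightarrow> L"
  proof
    fix x
    have "decseq (\<lambda>n. u n x)" by (rule decseq_SucI) (use uSuc fhnn in simp)
    then obtain L where "(\<lambda>n. u n x) \<longlonglongrightarrow> L" using decseq_convergent[of "\<lambda>n. u n x" 0] unn by blast
    then show "\<exists>L. (\<lambda>n. u n x) \<longlonglongrightarrow> L" by blast
  qed
  then obtain v where v: "\<And>x. (\<lambda>n. u n x) \<longlonglongrightarrow> v x" by metis
  have vnn: "v x \<ge> 0" for x using v[of x] unn by (intro LIMSEQ_le_const) auto
  have vharm: "x \<in> S \<Longrightarrow> v x = (\<Sum>w\<in>S-{z}. P x w * v w)" for x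
  proof -
    assume xS: "x \<in> S"
    have "(\<lambda>n. u (Suc n) x) \<longlonglongrightarrow> v x" using v[of x] by (rule LIMSEQ_Suc)
    moreover have "(\<lambda>n. u (Suc n) x) \<longlonglongrightarrow> (\<Sum>w\<in>S-{z}. P x w * v w)"
      unfolding uback[OF xS] by (intro tendsto_sum tendsto_mult_left v)
    ultimately show ?thesis by (rule LIMSEQ_unique)
  qed
  \<comment> \<open>maximum principle\<close>
  have v0: "\<forall>x\<in>S. v x = 0"
  proof (rule ccontr)
    assume "\<not> (\<forall>x\<in>S. v x = 0)"
    then obtain x1 where x1: "x1 \<in> S" "v x1 \<noteq> 0" by blast
    define M where "M = Max (v ` S)"
    have Mge: "x \<in> S \<Longrightarrow> v x \<le> M" for x unfolding M_def using fin by auto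
    have Mpos: "M > 0" using Mge[OF x1(1)] x1(2) vnn[of x1] by simp
    have "M \<in> v ` S" unfolding M_def using fin x1(1) by (intro Max_in) auto
    then obtain x0 where x0: "x0 \<in> S" "v x0 = M" by auto
    have closed: "P x z = 0 \<and> (\<forall>w\<in>S-{z}. P x w > 0 \<longrightarrow> v w = M)" if xS: "x \<in> S" and vx: "v x = M" for x
    proof -
      have "(\<Sum>w\<in>S-{z}. P x w * (M - v w)) = M * (\<Sum>w\<in>S-{z}. P x w) - (\<Sum>w\<in>S-{z}. P x w * v w)"
        by (simp add: algebra_simps sum_subtractf sum_distrib_left)
      also have "(\<Sum>w\<in>S-{z}. P x w) = 1 - P x z" using sum.remove[OF fin zS, of "P x"] rows[OF xS] by simp
      also have "(\<Sum>w\<in>S-{z}. P x w * v w) = M" using vharm[OF xS] vx by simp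
      finally have eq: "(\<Sum>w\<in>S-{z}. P x w * (M - v w)) = - M * P x z" by (simp add: algebra_simps)
      have nn: "w \<in> S-{z} \<Longrightarrow> P x w * (M - v w) \<ge> 0" for w
        using Pnn[OF xS, of w] Mge[of w] by auto
      have s0: "(\<Sum>w\<in>S-{z}. P x w * (M - v w)) \<ge> 0" using nn by (intro sum_nonneg) auto
      have "M * P x z \<ge> 0" using Mpos Pnn[OF xS zS] by simp
      then have "M * P x z = 0" using eq s0 by linarith
      then have Pz: "P x z = 0" using Mpos by simp
      then have "(\<Sum>w\<in>S-{z}. P x w * (M - v w)) = 0" using eq by simp
      moreover have "finite (S-{z})" using fin by simp
      ultimately have z0: "\<forall>w\<in>S-{z}. P x w * (M - v w) = 0"
        using sum_nonneg_eq_0_iff[of "S-{z}" "\<lambda>w. P x w * (M - v w)"] nn by simp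
      have "\<forall>w\<in>S-{z}. P x w > 0 \<longrightarrow> v w = M"
      proof (intro ballI impI)
        fix w assume "w \<in> S-{z}" "P x w > 0"
        then show "v w = M" using z0 by force
      qed
      then show ?thesis using Pz by blast
    qed
    have noA: "x \<in> S \<Longrightarrow> v x = M \<Longrightarrow> x \<noteq> z \<Longrightarrow> False" for x
    proof (induction x rule: measure_induct_rule[of \<phi>])
      case (less x)
      obtain y where y: "y \<in> S" "P x y > 0" "\<phi> y < \<phi> x" using irr[OF less.prems(1,3)] by blast
      have yz: "y \<noteq> z" using closed[OF less.prems(1,2)] y(2) by auto
      have "v y = M" using closed[OF less.prems(1,2)] y yz by auto
      then show False using less.IH[OF y(3) y(1) _ yz] by simp
    qed
    show False
    proof (cases "x0 = z")
      case False then show False using noA x0 by blast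
    next
      case True
      have "\<exists>y\<in>S. P z y > 0"
      proof (rule ccontr)
        assume "\<not> (\<exists>y\<in>S. P z y > 0)"
        then have "(\<Sum>y\<in>S. P z y) \<le> 0" by (intro sum_nonpos) (simp add: not_less)
        then show False using rows[OF zS] by simp
      qed
      then obtain y where y: "y \<in> S" "P z y > 0" by blast
      have cz: "P z z = 0 \<and> (\<forall>w\<in>S-{z}. P z w > 0 \<longrightarrow> v w = M)" using closed[OF zS] x0 True by simp
      then have "y \<noteq> z" using y by auto
      then show False using noA[OF y(1)] cz y by auto
    qed
  qed
  define B where "B n = (\<Sum>x\<in>S. Q x * u n x)" for n
  define T where "T n = u n z" for n
  define c where "c n y = (\<Sum>x\<in>S. Q x * t x n y)" for n y
  have cSuc: "c (Suc n) y = (if y = z then 0 else (\<Sum>w\<in>S. c n w * P w y))" for n y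
  proof (cases "y = z")
    case True then show ?thesis unfolding c_def t_def by simp
  next
    case False
    have "(\<Sum>x\<in>S. Q x * (\<Sum>w\<in>S. taboo P S {z} x n w * P w y)) = (\<Sum>w\<in>S. (\<Sum>x\<in>S. Q x * taboo P S {z} x n w) * P w y)"
      unfolding sum_distrib_left sum_distrib_right mult.assoc by (rule sum.swap)
    then show ?thesis unfolding c_def t_def using False by simp
  qed
  have c0: "y \<in> S \<Longrightarrow> c 0 y = Q y" for y
  proof -
    assume yS: "y \<in> S"
    have "c 0 y = (\<Sum>x\<in>S. if x = y then Q y else 0)" unfolding c_def t_def by (intro sum.cong) auto
    then show ?thesis using fin yS by simp
  qed
  have cstep: "y \<in> S \<Longrightarrow> c n y = Q z * t z n y + c (Suc n) y" for n y
  proof (induction n arbitrary: y)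
    case 0
    then show ?case using c0 stat[OF 0] unfolding cSuc t_def by (auto simp: c0 cong: sum.cong)
  next
    case (Suc n)
    have "c (Suc n) y = (if y = z then 0 else (\<Sum>w\<in>S. (Q z * t z n w + c (Suc n) w) * P w y))"
      unfolding cSuc[of n y] using Suc.IH by (simp cong: sum.cong)
    also have "\<dots> = Q z * t z (Suc n) y + c (Suc (Suc n)) y"
    proof (cases "y = z")
      case True then show ?thesis unfolding cSuc[of "Suc n" y] t_def by simp
    next
      case False
      have "(\<Sum>w\<in>S. (Q z * t z n w + c (Suc n) w) * P w y)
          = Q z * (\<Sum>w\<in>S. t z n w * P w y) + (\<Sum>w\<in>S. c (Suc n) w * P w y)"
        by (simp add: distrib_right sum.distrib sum_distrib_left mult.assoc)
      then show ?thesis using False unfolding cSuc[of "Suc n" y] t_def by simp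
    qed
    finally show ?case .
  qed
  have Bc: "B n = (\<Sum>y\<in>S. c n y)" for n
    unfolding B_def c_def u_def sum_distrib_left by (rule sum.swap)
  have Bstep: "B n = Q z * T n + B (Suc n)" for n
  proof -
    have "(\<Sum>y\<in>S. c n y) = (\<Sum>y\<in>S. Q z * t z n y + c (Suc n) y)"
      by (rule sum.cong[OF refl cstep])
    also have "\<dots> = Q z * (\<Sum>y\<in>S. t z n y) + (\<Sum>y\<in>S. c (Suc n) y)"
      by (simp add: sum.distrib sum_distrib_left)
    finally show ?thesis unfolding Bc T_def u_def .
  qed
  have B0: "B 0 = 1" unfolding B_def using u0 Qsum by simp
  have partial: "Q z * (\<Sum>i<m. T i) = 1 - B m" for m
  proof (induction m)
    case 0 then show ?case using B0 by simp
  next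
    case (Suc m) then show ?case using Bstep[of m] by (simp add: algebra_simps)
  qed
  have Blim: "B \<longlonglongrightarrow> 0"
  proof -
    have "B \<longlonglongrightarrow> (\<Sum>x\<in>S. Q x * v x)" unfolding B_def by (intro tendsto_sum tendsto_mult_left v)
    then show ?thesis using v0 by simp
  qed
  have Tsums: "T sums (1 / Q z)"
  proof -
    have "(\<lambda>m. (1 - B m) / Q z) \<longlonglongrightarrow> (1 - 0) / Q z"
      by (intro tendsto_divide tendsto_diff Blim tendsto_const) (use Qz in auto)
    moreover have "(\<lambda>m. (1 - B m) / Q z) = (\<lambda>m. \<Sum>i<m. T i)"
      using partial Qz by (auto simp: field_simps)
    ultimately show ?thesis unfolding sums_def by simp
  qed
  have Tnn: "T n \<ge> 0" for n unfolding T_def by (rule unn)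
  have T0: "T 0 = 1" unfolding T_def using u0[OF zS] .
  have TSuc: "T (Suc n) = T n - fh z n" for n unfolding T_def by (rule uSuc)
  have Tlim: "T \<longlonglongrightarrow> 0" using Tsums by (intro summable_LIMSEQ_zero sums_summable)
  have fsums: "(fh z) sums 1"
  proof -
    have "(\<Sum>i<m. fh z i) = T 0 - T m" for m
      using sum_lessThan_telescope'[of T m] TSuc by simp
    then have "(\<lambda>m. \<Sum>i<m. fh z i) = (\<lambda>m. 1 - T m)" using T0 by simp
    moreover have "(\<lambda>m. 1 - T m) \<longlonglongrightarrow> 1 - 0" by (intro tendsto_diff tendsto_const Tlim)
    ultimately show ?thesis unfolding sums_def by simp
  qed
  have nT: "(\<lambda>n. real n * T n) \<longlonglongrightarrow> 0"
    by (rule dec_summable_nT) (use TSuc fhnn Tnn Tsums sums_summable in auto)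
  have gsums: "(\<lambda>n. real (Suc n) * fh z n) sums (1 / Q z)"
  proof -
    have ps: "(\<Sum>i<m. real (Suc i) * fh z i) = (\<Sum>i<m. T i) - real m * T m" for m
    proof (induction m)
      case 0 then show ?case by simp
    next
      case (Suc m)
      have "(\<Sum>i<Suc m. real (Suc i) * fh z i) = (\<Sum>i<m. T i) - real m * T m + (real m + 1) * fh z m"
        using Suc.IH by simp
      also have "\<dots> = (\<Sum>i<Suc m. T i) - real (Suc m) * T (Suc m)"
        unfolding TSuc by (simp add: algebra_simps)
      finally show ?case .
    qed
    have "(\<lambda>m. (\<Sum>i<m. T i) - real m * T m) \<longlonglongrightarrow> 1 / Q z - 0"
      using Tsums nT unfolding sums_def by (intro tendsto_diff)
    then show ?thesis unfolding sums_def ps by simp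
  qed
  have E1: "(\<Sum>n. ennreal (real (Suc n) * first_hit P S {z} z n)) = ennreal (1 / Q z)"
  proof -
    have "(\<Sum>n. ennreal (real (Suc n) * fh z n)) = ennreal (\<Sum>n. real (Suc n) * fh z n)"
      by (rule suminf_ennreal2) (use fhnn gsums sums_summable in auto)
    also have "(\<Sum>n. real (Suc n) * fh z n) = 1 / Q z" using sums_unique[OF gsums] by simp
    finally show ?thesis unfolding fh_def' .
  qed
  have E2: "(\<Sum>n. ennreal (first_hit P S {z} z n)) = 1"
  proof -
    have "(\<Sum>n. ennreal (fh z n)) = ennreal (\<Sum>n. fh z n)"
      by (rule suminf_ennreal2) (use fhnn fsums sums_summable in auto)
    also have "(\<Sum>n. fh z n) = 1" using sums_unique[OF fsums] by simp
    finally show ?thesis unfolding fh_def' by simp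
  qed
  show ?thesis unfolding expected_hit_def E1 E2 by simp
qed




lemma sum_pm:
  assumes "finite L" "\<forall>i\<in>L. \<sigma> i = -1 \<or> \<sigma> i = (1::real)"
  shows "(\<Sum>i\<in>L. \<sigma> i) = 2 * real (card {i\<in>L. \<sigma> i = 1}) - real (card L)"
proof -
  define A where "A = {i\<in>L. \<sigma> i = 1}"
  have AL: "A \<subseteq> L" and fA: "finite A" unfolding A_def using assms(1) by auto
  have "(\<Sum>i\<in>L. \<sigma> i) = (\<Sum>i\<in>L-A. \<sigma> i) + (\<Sum>i\<in>A. \<sigma> i)" by (rule sum.subset_diff[OF AL assms(1)])
  also have "(\<Sum>i\<in>A. \<sigma> i) = real (card A)" unfolding A_def by simp
  also have "(\<Sum>i\<in>L-A. \<sigma> i) = (\<Sum>i\<in>L-A. -1)"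
    by (intro sum.cong) (use assms(2) in \<open>auto simp: A_def\<close>)
  also have "\<dots> = - real (card L - card A)" by (simp add: card_Diff_subset[OF fA AL])
  also have "card A \<le> card L" using AL assms(1) by (rule card_mono[rotated])
  then have "- real (card L - card A) + real (card A) = 2 * real (card A) - real (card L)"
    by (simp add: of_nat_diff)
  finally show ?thesis unfolding A_def .
qed

locale lumped =
  fixes N d :: nat and Lam :: "nat \<Rightarrow> nat set"
  assumes part: "is_partition N d Lam" and d1: "d \<ge> 1"
begin

lemma Lam_sub: "k < d \<Longrightarrow> Lam k \<subseteq> {1..N}"
  using part unfolding is_partition_def by blast

lemma Lam_fin: "k < d \<Longrightarrow> finite (Lam k)"
  using Lam_sub finite_subset by blast

lemma n_pos: "k < d \<Longrightarrow> card (Lam k) > 0"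
  using part Lam_fin unfolding is_partition_def by (simp add: card_gt_0_iff)

lemma Lam_disj: "k < d \<Longrightarrow> l < d \<Longrightarrow> k \<noteq> l \<Longrightarrow> Lam k \<inter> Lam l = {}"
  using part unfolding is_partition_def by blast

lemma sumN: "(\<Sum>k<d. card (Lam k)) = N"
proof -
  have "card (\<Union>k\<in>{..<d}. Lam k) = (\<Sum>k<d. card (Lam k))"
    by (rule card_UN_disjoint) (auto simp: Lam_fin Lam_disj)
  moreover have "(\<Union>k\<in>{..<d}. Lam k) = {1..N}" using part unfolding is_partition_def by blast
  ultimately show ?thesis by simp
qed

lemma N_pos: "N > 0"
proof -
  have "card (Lam 0) > 0" using n_pos d1 by simp
  moreover have "card (Lam 0) \<le> N" unfolding sumN[symmetric]
    using d1 by (intro member_le_sum) auto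
  ultimately show ?thesis by simp
qed

definition enc :: "(nat \<Rightarrow> nat) \<Rightarrow> nat \<Rightarrow> real" where
  "enc j = (\<lambda>k. if k < d then (2 * real (j k) - real (card (Lam k))) / real (card (Lam k)) else 0)"

definition JS :: "(nat \<Rightarrow> nat) set" where
  "JS = PiE {..<d} (\<lambda>k. {..card (Lam k)})"

lemma JS_fin: "finite JS" unfolding JS_def by (intro finite_PiE) auto

lemma Gamma_eq: "Gamma N d Lam = enc ` JS"
proof (intro equalityI subsetI)
  fix x assume xG: "x \<in> Gamma N d Lam"
  obtain \<sigma> where \<sigma>: "\<forall>i\<in>{1..N}. \<sigma> i = -1 \<or> \<sigma> i = 1" and x: "x = gamma d Lam \<sigma>"
    using xG by (auto simp: Defs.Gamma_def)
  define j where "j = (\<lambda>k\<in>{..<d}. card {i\<in>Lam k. \<sigma> i = 1})"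
  have "j \<in> JS" unfolding JS_def j_def
    by (auto intro!: card_mono Lam_fin)
  moreover have "x = enc j"
  proof
    fix k show "x k = enc j k"
    proof (cases "k < d")
      case True
      have "(\<Sum>i\<in>Lam k. \<sigma> i) = 2 * real (j k) - real (card (Lam k))"
        unfolding j_def using True Lam_sub[OF True] \<sigma> by (auto intro!: sum_pm Lam_fin)
      then show ?thesis unfolding x gamma_def enc_def using True by simp
    qed (simp add: x gamma_def enc_def)
  qed
  ultimately show "x \<in> enc ` JS" by blast
next
  fix x assume "x \<in> enc ` JS"
  then obtain j where j: "j \<in> JS" and x: "x = enc j" by blast
  have "\<forall>k\<in>{..<d}. \<exists>B. B \<subseteq> Lam k \<and> card B = j k"
  proof
    fix k assume k: "k \<in> {..<d}"
    then have "j k \<le> card (Lam k)" using j unfolding JS_def by auto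
    then obtain B where "B \<subseteq> Lam k" "card B = j k" by (rule obtain_subset_with_card_n)
    then show "\<exists>B. B \<subseteq> Lam k \<and> card B = j k" by blast
  qed
  then obtain B where B: "\<And>k. k < d \<Longrightarrow> B k \<subseteq> Lam k \<and> card (B k) = j k"
    by (metis lessThan_iff)
  define \<sigma> where "\<sigma> i = (if i \<in> (\<Union>k\<in>{..<d}. B k) then 1 else (-1::real))" for i
  have \<sigma>B: "k < d \<Longrightarrow> i \<in> Lam k \<Longrightarrow> (\<sigma> i = 1) = (i \<in> B k)" for k i
  proof -
    assume k: "k < d" and i: "i \<in> Lam k"
    have "i \<in> (\<Union>k\<in>{..<d}. B k) \<longleftrightarrow> i \<in> B k"
    proof
      assume "i \<in> (\<Union>k\<in>{..<d}. B k)"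
      then obtain l where l: "l < d" "i \<in> B l" by auto
      then have "i \<in> Lam l" using B by blast
      then have "l = k" using Lam_disj[OF k l(1)] i by blast
      then show "i \<in> B k" using l by simp
    qed (use k in auto)
    then show ?thesis unfolding \<sigma>_def by simp
  qed
  have "x = gamma d Lam \<sigma>"
  proof
    fix k show "x k = gamma d Lam \<sigma> k"
    proof (cases "k < d")
      case True
      have "{i\<in>Lam k. \<sigma> i = 1} = B k" using \<sigma>B[OF True] B[OF True] by blast
      then have "(\<Sum>i\<in>Lam k. \<sigma> i) = 2 * real (j k) - real (card (Lam k))"
        using sum_pm[OF Lam_fin[OF True], of \<sigma>] B[OF True] by (simp add: \<sigma>_def)
      then show ?thesis unfolding x gamma_def enc_def using True by simp
    qed (simp add: x gamma_def enc_def)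
  qed
  moreover have "\<forall>i\<in>{1..N}. \<sigma> i = -1 \<or> \<sigma> i = 1" unfolding \<sigma>_def by auto
  ultimately show "x \<in> Gamma N d Lam" unfolding Defs.Gamma_def by blast
qed

lemma Gamma_fin: "finite (Gamma N d Lam)" unfolding Gamma_eq using JS_fin by simp

lemma enc_eqI: "(\<And>k. k < d \<Longrightarrow> j k = j' k) \<Longrightarrow> enc j = enc j'"
  unfolding enc_def by auto

lemma enc_inj: "inj_on enc JS"
proof
  fix j j' assume j: "j \<in> JS" and j': "j' \<in> JS" and e: "enc j = enc j'"
  show "j = j'"
  proof
    fix k show "j k = j' k"
    proof (cases "k < d")
      case True
      have "enc j k = enc j' k" using e by simp
      then have "real (j k) = real (j' k)" unfolding enc_def using True n_pos[OF True] by (simp add: field_simps)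
      then show ?thesis by simp
    next
      case False then show ?thesis using j j' unfolding JS_def PiE_def extensional_def by auto
    qed
  qed
qed

lemma floor_enc: "k < d \<Longrightarrow> \<lfloor>real (card (Lam k)) * (1 + enc j k) / 2\<rfloor> = int (j k)"
proof -
  assume k: "k < d"
  have "real (card (Lam k)) * (1 + enc j k) / 2 = real (j k)"
    unfolding enc_def using k n_pos[OF k] by (simp add: field_simps)
  then show ?thesis by simp
qed

lemma QN_enc: "QN N d Lam (enc j) = (1/2)^N * (\<Prod>k<d. real (card (Lam k) choose j k))"
  unfolding QN_def by (intro arg_cong2[where f="(*)"] refl prod.cong) (auto simp: floor_enc)

lemma Qsum: "(\<Sum>x\<in>Gamma N d Lam. QN N d Lam x) = 1"
proof -
  have "(\<Sum>x\<in>Gamma N d Lam. QN N d Lam x) = (\<Sum>j\<in>JS. QN N d Lam (enc j))"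
    unfolding Gamma_eq by (rule sum.reindex[OF enc_inj, unfolded comp_def])
  also have "\<dots> = (1/2)^N * (\<Sum>j\<in>JS. \<Prod>k<d. real (card (Lam k) choose j k))"
    by (simp add: QN_enc sum_distrib_left)
  also have "(\<Sum>j\<in>JS. \<Prod>k<d. real (card (Lam k) choose j k)) = (\<Prod>k<d. \<Sum>i\<in>{..card (Lam k)}. real (card (Lam k) choose i))"
    unfolding JS_def by (rule prod_sum_PiE[symmetric]) auto
  also have "\<dots> = (\<Prod>k<d. 2 ^ card (Lam k))"
    by (intro prod.cong refl) (metis choose_row_sum of_nat_numeral of_nat_power of_nat_sum)
  also have "\<dots> = 2 ^ N" unfolding sumN[symmetric] by (simp add: power_sum)
  finally show ?thesis by (simp add: power_one_over)
qed


definition up :: "nat \<Rightarrow> (nat \<Rightarrow> real) \<Rightarrow> (nat \<Rightarrow> real)" where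
  "up k x = x(k := x k + 2 / real (card (Lam k)))"
definition dn :: "nat \<Rightarrow> (nat \<Rightarrow> real) \<Rightarrow> (nat \<Rightarrow> real)" where
  "dn k x = x(k := x k - 2 / real (card (Lam k)))"
definition pu :: "nat \<Rightarrow> (nat \<Rightarrow> real) \<Rightarrow> real" where
  "pu k x = real (card (Lam k)) / real N * (1 - x k) / 2"
definition pd :: "nat \<Rightarrow> (nat \<Rightarrow> real) \<Rightarrow> real" where
  "pd k x = real (card (Lam k)) / real N * (1 + x k) / 2"

lemma Pl_expand: "lumped_trans N d Lam x y =
   (\<Sum>k<d. (if y = dn k x then pd k x else 0) + (if y = up k x then pu k x else 0))"
  unfolding lumped_trans_def
proof (intro sum.cong refl)
  fix k
  define F where "F s = (if y = x(k := x k + s * 2 / real (card (Lam k))) then real (card (Lam k)) / real N * (1 - s * x k) / 2 else 0)" for s :: real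
  have "(\<Sum>s\<in>{-1, 1::real}. F s) = F (-1) + F 1"
    by (subst sum.insert) auto
  moreover have "F (-1) = (if y = dn k x then pd k x else 0)"
  proof -
    have e1: "x k + (-1) * 2 / real (card (Lam k)) = x k - 2 / real (card (Lam k))" by simp
    have e2: "(1 - (-1) * x k) = 1 + x k" by simp
    show ?thesis unfolding F_def e1 e2 dn_def pd_def ..
  qed
  moreover have "F 1 = (if y = up k x then pu k x else 0)"
  proof -
    have e1: "x k + 1 * 2 / real (card (Lam k)) = x k + 2 / real (card (Lam k))" by simp
    have e2: "(1 - 1 * x k) = 1 - x k" by simp
    show ?thesis unfolding F_def e1 e2 up_def pu_def ..
  qed
  ultimately show "(\<Sum>s\<in>{-1, 1::real}. if y = x(k := x k + s * 2 / real (card (Lam k))) then real (card (Lam k)) / real N * (1 - s * x k) / 2 else 0)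
     = (if y = dn k x then pd k x else 0) + (if y = up k x then pu k x else 0)"
    unfolding F_def by simp
qed

lemma up_dn: "up k (dn k y) = y" "dn k (up k x) = x"
  unfolding up_def dn_def by auto

lemma up_iff: "(y = up k x) = (x = dn k y)"
  using up_dn by metis

lemma JS_upd: "j \<in> JS \<Longrightarrow> k < d \<Longrightarrow> v \<le> card (Lam k) \<Longrightarrow> j(k := v) \<in> JS"
  unfolding JS_def by (auto simp: PiE_iff extensional_def)

lemma JS_le: "j \<in> JS \<Longrightarrow> k < d \<Longrightarrow> j k \<le> card (Lam k)"
  unfolding JS_def by auto

lemma enc_up: "k < d \<Longrightarrow> up k (enc j) = enc (j(k := Suc (j k)))"
proof
  fix l assume k: "k < d"
  show "up k (enc j) l = enc (j(k := Suc (j k))) l"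
    unfolding up_def enc_def using n_pos[OF k] k by (auto simp: field_simps)
qed

lemma enc_dn: "k < d \<Longrightarrow> j k \<ge> 1 \<Longrightarrow> dn k (enc j) = enc (j(k := j k - 1))"
proof
  fix l assume k: "k < d" and j: "j k \<ge> 1"
  show "dn k (enc j) l = enc (j(k := j k - 1)) l"
    unfolding dn_def enc_def using n_pos[OF k] k j by (auto simp: field_simps of_nat_diff)
qed

lemma enc_k: "k < d \<Longrightarrow> enc j k = (2 * real (j k) - real (card (Lam k))) / real (card (Lam k))"
  unfolding enc_def by simp

lemma pu_enc: "k < d \<Longrightarrow> j k \<le> card (Lam k) \<Longrightarrow> pu k (enc j) = (real (card (Lam k)) - real (j k)) / real N"
proof -
  assume k: "k < d"
  have n0: "real (card (Lam k)) \<noteq> 0" "real N \<noteq> 0" using n_pos[OF k] N_pos by auto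
  show ?thesis unfolding pu_def enc_k[OF k] using n0 by (simp add: field_simps)
qed

lemma pd_enc: "k < d \<Longrightarrow> pd k (enc j) = real (j k) / real N"
proof -
  assume k: "k < d"
  have n0: "real (card (Lam k)) \<noteq> 0" "real N \<noteq> 0" using n_pos[OF k] N_pos by auto
  show ?thesis unfolding pd_def enc_k[OF k] using n0 by (simp add: field_simps)
qed

lemma pu_nn: "j \<in> JS \<Longrightarrow> k < d \<Longrightarrow> pu k (enc j) \<ge> 0"
  using pu_enc JS_le N_pos by simp

lemma pd_nn: "k < d \<Longrightarrow> pd k (enc j) \<ge> 0"
  using pd_enc N_pos by simp

lemma Pl_nn: "x \<in> Gamma N d Lam \<Longrightarrow> lumped_trans N d Lam x y \<ge> 0"
  unfolding Pl_expand Gamma_eq using pu_nn pd_nn by (auto intro!: sum_nonneg)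

lemma rows: "x \<in> Gamma N d Lam \<Longrightarrow> (\<Sum>y\<in>Gamma N d Lam. lumped_trans N d Lam x y) = 1"
proof -
  assume "x \<in> Gamma N d Lam"
  then obtain j where j: "j \<in> JS" and x: "x = enc j" unfolding Gamma_eq by blast
  have "(\<Sum>y\<in>Gamma N d Lam. lumped_trans N d Lam x y)
      = (\<Sum>k<d. \<Sum>y\<in>Gamma N d Lam. (if y = dn k x then pd k x else 0) + (if y = up k x then pu k x else 0))"
    unfolding Pl_expand by (rule sum.swap)
  also have "\<dots> = (\<Sum>k<d. (if dn k x \<in> Gamma N d Lam then pd k x else 0) + (if up k x \<in> Gamma N d Lam then pu k x else 0))"
    by (simp add: sum.distrib Gamma_fin)
  also have "\<dots> = (\<Sum>k<d. pd k x + pu k x)"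
  proof (intro sum.cong refl)
    fix k assume "k \<in> {..<d}"
    then have k: "k < d" by simp
    have a: "(if dn k x \<in> Gamma N d Lam then pd k x else 0) = pd k x"
    proof (cases "j k \<ge> 1")
      case True
      have "j(k := j k - 1) \<in> JS" using JS_upd[OF j k] JS_le[OF j k] by simp
      then show ?thesis unfolding x enc_dn[of k j, OF k True] Gamma_eq by auto
    next
      case False then show ?thesis unfolding x pd_enc[OF k] by simp
    qed
    have b: "(if up k x \<in> Gamma N d Lam then pu k x else 0) = pu k x"
    proof (cases "j k < card (Lam k)")
      case True
      have "j(k := Suc (j k)) \<in> JS" using JS_upd[OF j k] True by simp
      then show ?thesis unfolding x enc_up[OF k] Gamma_eq by auto
    next
      case False then have "j k = card (Lam k)" using JS_le[OF j k] by simp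
      then show ?thesis unfolding x pu_enc[of k j, OF k JS_le[OF j k]] by simp
    qed
    show "(if dn k x \<in> Gamma N d Lam then pd k x else 0) + (if up k x \<in> Gamma N d Lam then pu k x else 0) = pd k x + pu k x"
      unfolding a b ..
  qed
  also have "\<dots> = (\<Sum>k<d. real (card (Lam k)) / real N)"
    unfolding pd_def pu_def using N_pos by (intro sum.cong refl) (simp add: field_simps)
  also have "\<dots> = real (\<Sum>k<d. card (Lam k)) / real N" by (simp add: sum_divide_distrib)
  also have "\<dots> = 1" unfolding sumN using N_pos by simp
  finally show ?thesis .
qed

lemma binom_step: "j < n \<Longrightarrow> real (n choose j) * (real n - real j) = real (n choose Suc j) * real (Suc j)"
proof -
  assume "j < n"
  have "(n - j) * (n choose j) = n * (n - 1 choose j)" by (rule binomial_absorb_comp)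
  also have "\<dots> = Suc j * (n choose Suc j)" by (rule binomial_absorption[symmetric])
  finally have "real ((n - j) * (n choose j)) = real (Suc j * (n choose Suc j))" by simp
  then show ?thesis using \<open>j < n\<close> by (simp add: of_nat_diff algebra_simps)
qed

lemma TL:
  assumes x: "x \<in> Gamma N d Lam" and y: "y \<in> Gamma N d Lam" and k: "k < d"
  shows "QN N d Lam x * (if y = up k x then pu k x else 0) = QN N d Lam y * (if x = dn k y then pd k y else 0)"
proof (cases "y = up k x")
  case False then show ?thesis using up_iff by simp
next
  case True
  then have xy: "x = dn k y" using up_iff by simp
  obtain j where j: "j \<in> JS" and xj: "x = enc j" using x unfolding Gamma_eq by blast
  obtain j' where j': "j' \<in> JS" and yj: "y = enc j'" using y unfolding Gamma_eq by blast
  have jk: "j' k = Suc (j k)"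
  proof -
    have "enc j' k = enc j k + 2 / real (card (Lam k))" using True unfolding xj yj up_def by simp
    then have "real (j' k) = real (j k) + 1" unfolding enc_k[OF k] using n_pos[OF k] by (simp add: field_simps)
    then show ?thesis by simp
  qed
  have jl: "l < d \<Longrightarrow> l \<noteq> k \<Longrightarrow> j' l = j l" for l
  proof -
    assume l: "l < d" "l \<noteq> k"
    have "enc j' l = enc j l" using True l unfolding xj yj up_def by simp
    then have "real (j' l) = real (j l)" unfolding enc_k[OF l(1)] using n_pos[OF l(1)] by (simp add: field_simps)
    then show ?thesis by simp
  qed
  have lt: "j k < card (Lam k)" using JS_le[OF j' k] jk by simp
  define R where "R = (\<Prod>l\<in>{..<d}-{k}. real (card (Lam l) choose j l))"
  have R': "(\<Prod>l\<in>{..<d}-{k}. real (card (Lam l) choose j' l)) = R"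
    unfolding R_def by (intro prod.cong refl) (auto simp: jl)
  have Qx: "QN N d Lam x = (1/2)^N * (real (card (Lam k) choose j k) * R)"
    unfolding xj QN_enc R_def using k by (subst prod.remove[of _ k]) auto
  have Qy: "QN N d Lam y = (1/2)^N * (real (card (Lam k) choose j' k) * R)"
    unfolding yj QN_enc R'[symmetric] using k by (subst prod.remove[of _ k]) auto
  have "QN N d Lam x * pu k x = (1/2)^N * R / real N * (real (card (Lam k) choose j k) * (real (card (Lam k)) - real (j k)))"
    unfolding Qx unfolding xj pu_enc[of k j, OF k JS_le[OF j k]] using N_pos by (simp add: field_simps)
  also have "\<dots> = (1/2)^N * R / real N * (real (card (Lam k) choose Suc (j k)) * real (Suc (j k)))"
    using binom_step[OF lt] by simp
  also have "\<dots> = QN N d Lam y * pd k y"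
    unfolding Qy unfolding yj pd_enc[OF k] jk using N_pos by (simp add: field_simps)
  finally have fin: "QN N d Lam x * pu k x = QN N d Lam y * pd k y" .
  have i1: "(if y = up k x then pu k x else 0) = pu k x" using True by (simp only: if_True refl)
  have i2: "(if x = dn k y then pd k y else 0) = pd k y" using xy by (simp only: if_True refl)
  show ?thesis unfolding i1 i2 by (rule fin)
qed

lemma DB:
  assumes x: "x \<in> Gamma N d Lam" and y: "y \<in> Gamma N d Lam"
  shows "QN N d Lam x * lumped_trans N d Lam x y = QN N d Lam y * lumped_trans N d Lam y x"
proof -
  have "QN N d Lam x * lumped_trans N d Lam x y =
     (\<Sum>k<d. QN N d Lam x * (if y = dn k x then pd k x else 0) + QN N d Lam x * (if y = up k x then pu k x else 0))"
    unfolding Pl_expand by (simp add: sum_distrib_left distrib_left)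
  also have "\<dots> = (\<Sum>k<d. QN N d Lam y * (if x = up k y then pu k y else 0) + QN N d Lam y * (if x = dn k y then pd k y else 0))"
    by (intro sum.cong refl) (simp add: TL[OF x y] TL[OF y x])
  also have "\<dots> = QN N d Lam y * lumped_trans N d Lam y x"
    unfolding Pl_expand by (simp add: sum_distrib_left distrib_left add.commute)
  finally show ?thesis .
qed

lemma stat: "y \<in> Gamma N d Lam \<Longrightarrow> (\<Sum>x\<in>Gamma N d Lam. QN N d Lam x * lumped_trans N d Lam x y) = QN N d Lam y"
proof -
  assume y: "y \<in> Gamma N d Lam"
  have "(\<Sum>x\<in>Gamma N d Lam. QN N d Lam x * lumped_trans N d Lam x y) = (\<Sum>x\<in>Gamma N d Lam. QN N d Lam y * lumped_trans N d Lam y x)"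
    by (intro sum.cong refl DB y)
  also have "\<dots> = QN N d Lam y" using rows[OF y] by (simp add: sum_distrib_left[symmetric])
  finally show ?thesis .
qed

lemma QN_nn: "QN N d Lam x \<ge> 0"
  unfolding QN_def by (intro mult_nonneg_nonneg prod_nonneg) auto


definition phi :: "(nat \<Rightarrow> real) \<Rightarrow> (nat \<Rightarrow> real) \<Rightarrow> nat" where
  "phi z x = (\<Sum>k<d. nat \<bar>\<lfloor>real (card (Lam k)) * (1 + x k) / 2\<rfloor> - \<lfloor>real (card (Lam k)) * (1 + z k) / 2\<rfloor>\<bar>)"

lemma phi_enc: "phi (enc jz) (enc j) = (\<Sum>k<d. nat \<bar>int (j k) - int (jz k)\<bar>)"
  unfolding phi_def by (intro sum.cong refl) (simp add: floor_enc)

lemma terms_nn: "x \<in> Gamma N d Lam \<Longrightarrow> k < d \<Longrightarrow>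
   0 \<le> (if y = dn k x then pd k x else 0) + (if y = up k x then pu k x else 0)"
proof -
  assume x: "x \<in> Gamma N d Lam" and k: "k < d"
  obtain j where j: "j \<in> JS" and xj: "x = enc j" using x unfolding Gamma_eq by blast
  show ?thesis using pu_nn[OF j k] pd_nn[OF k, of j] unfolding xj by simp
qed

lemma Pl_ge_term: "x \<in> Gamma N d Lam \<Longrightarrow> k < d \<Longrightarrow>
   (if y = dn k x then pd k x else 0) + (if y = up k x then pu k x else 0) \<le> lumped_trans N d Lam x y"
  unfolding Pl_expand
  apply (rule member_le_sum)
    apply simp
   apply (rule terms_nn)
    apply assumption
   apply simp
  apply simp
  done

lemma Pl_ge_up: "x \<in> Gamma N d Lam \<Longrightarrow> k < d \<Longrightarrow> lumped_trans N d Lam x (up k x) \<ge> pu k x"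
proof -
  assume x: "x \<in> Gamma N d Lam" and k: "k < d"
  obtain j where j: "j \<in> JS" and xj: "x = enc j" using x unfolding Gamma_eq by blast
  have "pu k x \<le> (if up k x = dn k x then pd k x else 0) + (if up k x = up k x then pu k x else 0)"
    using pd_nn[OF k, of j] unfolding xj by simp
  also have "\<dots> \<le> lumped_trans N d Lam x (up k x)" by (rule Pl_ge_term[OF x k])
  finally show ?thesis .
qed

lemma Pl_ge_dn: "x \<in> Gamma N d Lam \<Longrightarrow> k < d \<Longrightarrow> lumped_trans N d Lam x (dn k x) \<ge> pd k x"
proof -
  assume x: "x \<in> Gamma N d Lam" and k: "k < d"
  obtain j where j: "j \<in> JS" and xj: "x = enc j" using x unfolding Gamma_eq by blast
  have "pd k x \<le> (if dn k x = dn k x then pd k x else 0) + (if dn k x = up k x then pu k x else 0)"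
    using pu_nn[OF j k] unfolding xj by simp
  also have "\<dots> \<le> lumped_trans N d Lam x (dn k x)" by (rule Pl_ge_term[OF x k])
  finally show ?thesis .
qed

lemma irr:
  assumes z: "z \<in> Gamma N d Lam" and x: "x \<in> Gamma N d Lam" and xz: "x \<noteq> z"
  shows "\<exists>y\<in>Gamma N d Lam. lumped_trans N d Lam x y > 0 \<and> phi z y < phi z x"
proof -
  obtain j where j: "j \<in> JS" and xj: "x = enc j" using x unfolding Gamma_eq by blast
  obtain jz where jz: "jz \<in> JS" and zj: "z = enc jz" using z unfolding Gamma_eq by blast
  obtain k where k: "k < d" and jk: "j k \<noteq> jz k"
    using xz enc_eqI[of j jz] unfolding xj zj by blast
  have Npos: "real N > 0" using N_pos by simp
  show ?thesis
  proof (cases "j k < jz k")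
    case True
    define j1 where "j1 = j(k := Suc (j k))"
    have lt: "j k < card (Lam k)" using True JS_le[OF jz k] by simp
    have j1: "j1 \<in> JS" unfolding j1_def using JS_upd[OF j k] lt by simp
    have y: "up k x = enc j1" unfolding xj j1_def by (rule enc_up[OF k])
    have "pu k x > 0" unfolding xj pu_enc[of k j, OF k JS_le[OF j k]] using lt Npos by simp
    then have P: "lumped_trans N d Lam x (up k x) > 0" using Pl_ge_up[OF x k] by linarith
    have "phi z (up k x) < phi z x"
      unfolding y unfolding xj zj phi_enc
    proof (rule sum_strict_mono_ex1)
      show "\<forall>l\<in>{..<d}. nat \<bar>int (j1 l) - int (jz l)\<bar> \<le> nat \<bar>int (j l) - int (jz l)\<bar>"
        unfolding j1_def using True by auto
      show "\<exists>l\<in>{..<d}. nat \<bar>int (j1 l) - int (jz l)\<bar> < nat \<bar>int (j l) - int (jz l)\<bar>"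
        using k True unfolding j1_def by (intro bexI[of _ k]) auto
    qed simp
    moreover have "up k x \<in> Gamma N d Lam" unfolding y Gamma_eq using j1 by simp
    ultimately show ?thesis using P by blast
  next
    case False
    then have gt: "j k > jz k" using jk by simp
    then have j1k: "j k \<ge> 1" by simp
    define j1 where "j1 = j(k := j k - 1)"
    have j1: "j1 \<in> JS" unfolding j1_def using JS_upd[OF j k] JS_le[OF j k] by simp
    have y: "dn k x = enc j1" unfolding xj j1_def by (rule enc_dn[of k j, OF k j1k])
    have "pd k x > 0" unfolding xj pd_enc[OF k] using gt Npos by simp
    then have P: "lumped_trans N d Lam x (dn k x) > 0" using Pl_ge_dn[OF x k] by linarith
    have "phi z (dn k x) < phi z x"
      unfolding y unfolding xj zj phi_enc
    proof (rule sum_strict_mono_ex1)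
      show "\<forall>l\<in>{..<d}. nat \<bar>int (j1 l) - int (jz l)\<bar> \<le> nat \<bar>int (j l) - int (jz l)\<bar>"
        unfolding j1_def using gt by auto
      show "\<exists>l\<in>{..<d}. nat \<bar>int (j1 l) - int (jz l)\<bar> < nat \<bar>int (j l) - int (jz l)\<bar>"
        using k gt unfolding j1_def by (intro bexI[of _ k]) auto
    qed simp
    moreover have "dn k x \<in> Gamma N d Lam" unfolding y Gamma_eq using j1 by simp
    ultimately show ?thesis using P by blast
  qed
qed

lemma QN_max:
  assumes z: "z \<in> Gamma N d Lam" and mx: "\<forall>x\<in>Gamma N d Lam. QN N d Lam x \<le> QN N d Lam z"
  shows "QN N d Lam z = (1/2)^N * (\<Prod>k<d. real (card (Lam k) choose (card (Lam k) div 2)))"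
proof (rule antisym)
  obtain jz where jz: "jz \<in> JS" and zj: "z = enc jz" using z unfolding Gamma_eq by blast
  show "QN N d Lam z \<le> (1/2)^N * (\<Prod>k<d. real (card (Lam k) choose (card (Lam k) div 2)))"
    unfolding zj QN_enc
    by (intro mult_left_mono prod_mono) (auto simp: binomial_maximum)
  define jc where "jc = (\<lambda>k\<in>{..<d}. card (Lam k) div 2)"
  have jc: "jc \<in> JS" unfolding JS_def jc_def by auto
  have "QN N d Lam (enc jc) = (1/2)^N * (\<Prod>k<d. real (card (Lam k) choose (card (Lam k) div 2)))"
    unfolding QN_enc jc_def by (intro arg_cong2[where f="(*)"] refl prod.cong) auto
  moreover have "enc jc \<in> Gamma N d Lam" unfolding Gamma_eq using jc by simp
  ultimately show "(1/2)^N * (\<Prod>k<d. real (card (Lam k) choose (card (Lam k) div 2))) \<le> QN N d Lam z"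
    using mx by metis
qed

end

theorem lemma2p6:
  shows "\<exists>C::real. \<forall>N d Lam z.
     d \<ge> 1 \<and> is_partition N d Lam \<and> z \<in> Gamma N d Lam \<and>
     (\<forall>x\<in>Gamma N d Lam. QN N d Lam x \<le> QN N d Lam z) \<longrightarrow>
     (\<exists>\<epsilon>::nat \<Rightarrow> real.
        (\<forall>k<d. \<bar>\<epsilon> k\<bar> \<le> C / real (card (Lam k))) \<and>
        expected_hit (lumped_trans N d Lam) (Gamma N d Lam) {z} z
          = ennreal (\<Prod>k<d. sqrt (pi / 2 * real (card (Lam k))) * (1 + \<epsilon> k)))"
proof (intro exI[of _ 1] allI impI)
  fix N d Lam z
  assume H: "d \<ge> 1 \<and> is_partition N d Lam \<and> z \<in> Gamma N d Lam \<and>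
     (\<forall>x\<in>Gamma N d Lam. QN N d Lam x \<le> QN N d Lam z)"
  interpret L: lumped N d Lam using H by unfold_locales auto
  have z: "z \<in> Gamma N d Lam" and mx: "\<forall>x\<in>Gamma N d Lam. QN N d Lam x \<le> QN N d Lam z"
    using H by auto
  define Cb where "Cb k = real (card (Lam k) choose (card (Lam k) div 2))" for k
  have Cbpos: "Cb k > 0" for k unfolding Cb_def by simp
  have Qz: "QN N d Lam z = (1/2)^N * (\<Prod>k<d. Cb k)" unfolding Cb_def by (rule L.QN_max[OF z mx])
  have Qzpos: "QN N d Lam z > 0" unfolding Qz using Cbpos by (simp add: prod_pos)
  have E: "expected_hit (lumped_trans N d Lam) (Gamma N d Lam) {z} z = ennreal (1 / QN N d Lam z)"
  proof (rule kac[where \<phi>="L.phi z"])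
    show "finite (Gamma N d Lam)" by (rule L.Gamma_fin)
    show "z \<in> Gamma N d Lam" by (rule z)
    show "\<And>x y. x \<in> Gamma N d Lam \<Longrightarrow> y \<in> Gamma N d Lam \<Longrightarrow> 0 \<le> lumped_trans N d Lam x y"
      by (rule L.Pl_nn)
    show "\<And>x. x \<in> Gamma N d Lam \<Longrightarrow> (\<Sum>y\<in>Gamma N d Lam. lumped_trans N d Lam x y) = 1"
      by (rule L.rows)
    show "\<And>x. x \<in> Gamma N d Lam \<Longrightarrow> 0 \<le> QN N d Lam x" by (rule L.QN_nn)
    show "0 < QN N d Lam z" by (rule Qzpos)
    show "(\<Sum>x\<in>Gamma N d Lam. QN N d Lam x) = 1" by (rule L.Qsum)
    show "\<And>y. y \<in> Gamma N d Lam \<Longrightarrow> (\<Sum>x\<in>Gamma N d Lam. QN N d Lam x * lumped_trans N d Lam x y) = QN N d Lam y"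
      by (rule L.stat)
    show "\<And>x. x \<in> Gamma N d Lam \<Longrightarrow> x \<noteq> z \<Longrightarrow> \<exists>y\<in>Gamma N d Lam. 0 < lumped_trans N d Lam x y \<and> L.phi z y < L.phi z x"
      by (rule L.irr[OF z])
  qed
  have "\<forall>k\<in>{..<d}. \<exists>e. \<bar>e\<bar> \<le> 1 / real (card (Lam k)) \<and>
      2 ^ card (Lam k) / Cb k = sqrt (pi / 2 * real (card (Lam k))) * (1 + e)"
  proof
    fix k assume "k \<in> {..<d}"
    then have "card (Lam k) \<ge> 1" using L.n_pos by (simp add: Suc_le_eq)
    then show "\<exists>e. \<bar>e\<bar> \<le> 1 / real (card (Lam k)) \<and>
      2 ^ card (Lam k) / Cb k = sqrt (pi / 2 * real (card (Lam k))) * (1 + e)"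
      unfolding Cb_def by (rule binom_asymp)
  qed
  then obtain \<epsilon> where eps: "\<And>k. k \<in> {..<d} \<Longrightarrow> \<bar>\<epsilon> k\<bar> \<le> 1 / real (card (Lam k)) \<and>
      2 ^ card (Lam k) / Cb k = sqrt (pi / 2 * real (card (Lam k))) * (1 + \<epsilon> k)"
    by metis
  have "1 / QN N d Lam z = (2::real) ^ N / (\<Prod>k<d. Cb k)"
    unfolding Qz by (simp add: power_one_over field_simps)
  also have "(2::real) ^ N = (\<Prod>k<d. 2 ^ card (Lam k))"
    unfolding L.sumN[symmetric] by (simp add: power_sum)
  also have "(\<Prod>k<d. (2::real) ^ card (Lam k)) / (\<Prod>k<d. Cb k) = (\<Prod>k<d. 2 ^ card (Lam k) / Cb k)"
    by (rule prod_dividef[symmetric])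
  also have "\<dots> = (\<Prod>k<d. sqrt (pi / 2 * real (card (Lam k))) * (1 + \<epsilon> k))"
    by (intro prod.cong refl) (use eps in blast)
  finally have F: "1 / QN N d Lam z = (\<Prod>k<d. sqrt (pi / 2 * real (card (Lam k))) * (1 + \<epsilon> k))" .
  show "\<exists>\<epsilon>::nat \<Rightarrow> real.
        (\<forall>k<d. \<bar>\<epsilon> k\<bar> \<le> 1 / real (card (Lam k))) \<and>
        expected_hit (lumped_trans N d Lam) (Gamma N d Lam) {z} z
          = ennreal (\<Prod>k<d. sqrt (pi / 2 * real (card (Lam k))) * (1 + \<epsilon> k))"
    using eps E F by (intro exI[of _ \<epsilon>]) auto
qed

end
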